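(* Let $(c_{a,b})_{(a,b)\in I}$ be arbitrary real numbers indexed by $I=\{(a,b): b=1,2,\dots;\ a=b+1,\dots,2b\}$, and let $\beta=\sum_{n\ge1}\alpha_n s^n$ be the unique formal power series in $s$ (with zero constant term) satisfying \[ \beta=s\Big[1+\sum_{(a,b)\in I}c_{a,b}\,\beta^a s^{b-a}\Big]. \] Then, with $\mathbb N=\{0,1,2,\dots\}$ and $S_n:=\{(n_{a,b})\in\mathbb N^I: n=1+\sum_{I} b\,n_{a,b}\}$, \[ \alpha_n=\sum_{(n_{a,b})\in S_n}\frac{\big[\sum_I a\,n_{a,b}\big]!}{\big[\prod_I n_{a,b}!\big]\,\big[1+\sum_I (a-1)n_{a,b}\big]!}\prod_I c_{a,b}^{\,n_{a,b}}. \]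
   Context: Only finitely many $n_{a,b}$ are nonzero for elements of $S_n$, so all sums and products are finite. Note $b-a<0$ on $I$ but since $a\le 2b$ the right side of the defining equation, after substituting a series $\beta=s+O(s^2)$, is a well-defined formal power series in $s$. *)

theory Defs
  imports "HOL-Analysis.Analysis" "HOL-Computational_Algebra.Formal_Power_Series"
begin

definition idx_I :: "(nat \<times> nat) set" where
  "idx_I = {(a, b). 1 \<le> b \<and> b + 1 \<le> a \<and> a \<le> 2 * b}"

definition supp_fam :: "(nat \<times> nat \<Rightarrow> nat) \<Rightarrow> (nat \<times> nat) set" where
  "supp_fam m = {p. m p \<noteq> 0}"

text \<open>S_n: finitely supported families in N^I (represented as functions vanishing
  outside I) with n = 1 + sum_I b n_{a,b}.  Sums over I are taken over the finite support.\<close>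
definition S_set :: "nat \<Rightarrow> (nat \<times> nat \<Rightarrow> nat) set" where
  "S_set n = {m. supp_fam m \<subseteq> idx_I \<and> finite (supp_fam m) \<and>
                 n = 1 + (\<Sum>(a, b)\<in>supp_fam m. b * m (a, b))}"

text \<open>The term c_{a,b} beta^a s^{b-a} (with b - a < 0), as a formal power series:
  beta^a divided by s^(a-b).\<close>
definition eq_term :: "(nat \<times> nat \<Rightarrow> real) \<Rightarrow> real fps \<Rightarrow> nat \<times> nat \<Rightarrow> real fps" where
  "eq_term c \<beta> p = (case p of (a, b) \<Rightarrow> fps_const (c (a, b)) * (\<beta> ^ a / fps_X ^ (a - b)))"

end

theory Submission
  imports Defs "HOL-Combinatorics.Multiset_Permutations"
begin

no_notation vec_nth (infixl "$" 90)
notation fps_nth (infixl "$" 75)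

definition In :: "nat \<Rightarrow> (nat \<times> nat) set" where
  "In n = {p \<in> idx_I. snd p \<le> n}"

lemma In_finite: "finite (In n)"
proof -
  have "In n \<subseteq> {..2*n} \<times> {..n}" by (auto simp: In_def idx_I_def)
  thus ?thesis by (rule finite_subset) auto
qed

lemma pow_nth_low:
  fixes f :: "real fps"
  assumes "f $ 0 = 0" "q < a"
  shows "(f ^ a) $ q = 0"
  using assms(2)
proof (induction a arbitrary: q)
  case 0 then show ?case by simp
next
  case (Suc a)
  have "(f ^ Suc a) $ q = (\<Sum>i=0..q. f $ i * (f ^ a) $ (q - i))"
    by (simp add: fps_mult_nth)
  also have "\<dots> = 0"
  proof (rule sum.neutral, safe)
    fix i assume "i \<in> {0..q}"
    show "f $ i * (f ^ a) $ (q - i) = 0"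
    proof (cases "i = 0")
      case True then show ?thesis using assms(1) by simp
    next
      case False then have "q - i < a" using Suc.prems \<open>i \<in> {0..q}\<close> by auto
      then show ?thesis using Suc.IH by simp
    qed
  qed
  finally show ?case .
qed

lemma pow_nth_agree:
  fixes f g :: "real fps"
  assumes "f $ 0 = 0" "g $ 0 = 0" "\<forall>i<m. f $ i = g $ i" "p + 1 < m + a"
  shows "(f ^ a) $ p = (g ^ a) $ p"
  using assms(4)
proof (induction a arbitrary: p)
  case 0 then show ?case by simp
next
  case (Suc a)
  have "(f ^ Suc a) $ p = (\<Sum>i=0..p. f $ i * (f ^ a) $ (p - i))"
    by (simp add: fps_mult_nth)
  also have "\<dots> = (\<Sum>i=0..p. g $ i * (g ^ a) $ (p - i))"
  proof (rule sum.cong, simp)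
    fix i assume i: "i \<in> {0..p}"
    show "f $ i * (f ^ a) $ (p - i) = g $ i * (g ^ a) $ (p - i)"
    proof (cases "i = 0")
      case True then show ?thesis using assms(1,2) by simp
    next
      case False
      show ?thesis
      proof (cases "i < m")
        case True
        then have "p - i + 1 < m + a" using Suc.prems False i by auto
        then show ?thesis using Suc.IH assms(3) True by simp
      next
        case False
        then have "p - i < a" using Suc.prems i by auto
        then show ?thesis using pow_nth_low assms(1,2) by simp
      qed
    qed
  qed
  also have "\<dots> = (g ^ Suc a) $ p"
    by (simp add: fps_mult_nth)
  finally show ?case .
qed

definition Rec :: "(nat \<times> nat \<Rightarrow> real) \<Rightarrow> real fps \<Rightarrow> bool" where
  "Rec c f \<longleftrightarrow> f $ 0 = 0 \<and> (\<forall>n. f $ Suc n = (if n = 0 then 1 else 0) +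
      (\<Sum>p\<in>In n. c p * (f ^ fst p) $ (n + fst p - snd p)))"

lemma Rec_unique:
  assumes "Rec c f" "Rec c g"
  shows "f = g"
proof -
  have f0: "f $ 0 = 0" and g0: "g $ 0 = 0" using assms by (auto simp: Rec_def)
  have "\<forall>i<m. f $ i = g $ i" for m
  proof (induction m)
    case 0 then show ?case by simp
  next
    case (Suc m)
    have "f $ m = g $ m"
    proof (cases m)
      case 0 then show ?thesis using f0 g0 by simp
    next
      case (Suc n)
      have "(\<Sum>p\<in>In n. c p * (f ^ fst p) $ (n + fst p - snd p)) =
            (\<Sum>p\<in>In n. c p * (g ^ fst p) $ (n + fst p - snd p))"
      proof (rule sum.cong, simp)
        fix p assume "p \<in> In n"
        then have "1 \<le> snd p" "snd p \<le> n" by (auto simp: In_def idx_I_def)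
        then have "n + fst p - snd p + 1 < m + fst p" using Suc by auto
        then show "c p * (f ^ fst p) $ (n + fst p - snd p) = c p * (g ^ fst p) $ (n + fst p - snd p)"
          using pow_nth_agree[OF f0 g0 Suc.IH] by simp
      qed
      then show ?thesis using assms Suc by (simp add: Rec_def)
    qed
    then show ?case using Suc.IH less_Suc_eq by auto
  qed
  then show ?thesis by (intro fps_ext) blast
qed

lemma eq_term_nth:
  "eq_term c \<beta> p $ n = c p * (\<beta> ^ fst p) $ (n + (fst p - snd p))"
  by (cases p) (simp add: eq_term_def fps_divide_def fps_X_power_subdegree fps_X_power_unit_factor)

lemma Rec_beta:
  fixes c :: "nat \<times> nat \<Rightarrow> real" and \<beta> :: "real fps"
  assumes const0: "fps_nth \<beta> 0 = 0"
    and eqn: "\<exists>T. (eq_term c \<beta> has_sum T) idx_I \<and> \<beta> = fps_X * (1 + T)"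
  shows "Rec c \<beta>"
proof -
  obtain T where hs: "(eq_term c \<beta> has_sum T) idx_I" and bT: "\<beta> = fps_X * (1 + T)"
    using eqn by blast
  have Tn: "T $ n = (\<Sum>p\<in>In n. c p * (\<beta> ^ fst p) $ (n + fst p - snd p))" for n
  proof -
    have add: "Modules.additive (\<lambda>g::real fps. g $ n)"
      by (simp add: Modules.additive_def)
    have cont: "(\<lambda>g::real fps. g $ n) \<midarrow>T\<rightarrow> T $ n"
      by (rule tendsto_eventually, rule eventually_at_filter[THEN iffD2],
          rule eventually_mono[OF eventually_fps_nth_eq_nhds_fps]) auto
    have h1: "((\<lambda>p. eq_term c \<beta> p $ n) has_sum T $ n) idx_I"
      using has_sum_comm_additive[OF add cont hs] by (simp add: o_def)
    have h2: "((\<lambda>p. eq_term c \<beta> p $ n) has_sum (\<Sum>p\<in>In n. eq_term c \<beta> p $ n)) (In n)"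
      by (rule has_sum_finite[OF In_finite])
    have h3: "((\<lambda>p. eq_term c \<beta> p $ n) has_sum (\<Sum>p\<in>In n. eq_term c \<beta> p $ n)) idx_I"
    proof (rule has_sum_cong_neutral[THEN iffD1, OF _ _ _ h2])
      fix p assume "p \<in> idx_I - In n"
      then have "n + (fst p - snd p) < fst p" by (auto simp: In_def idx_I_def)
      then show "eq_term c \<beta> p $ n = 0" by (simp add: eq_term_nth pow_nth_low[OF const0])
    qed (auto simp: In_def)
    have "T $ n = (\<Sum>p\<in>In n. eq_term c \<beta> p $ n)" using has_sum_unique[OF h1 h3] .
    also have "\<dots> = (\<Sum>p\<in>In n. c p * (\<beta> ^ fst p) $ (n + fst p - snd p))"
      by (rule sum.cong) (auto simp: eq_term_nth In_def idx_I_def)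
    finally show ?thesis .
  qed
  show ?thesis unfolding Rec_def
  proof (intro conjI allI)
    show "\<beta> $ 0 = 0" by fact
    fix n show "\<beta> $ Suc n = (if n = 0 then 1 else 0) + (\<Sum>p\<in>In n. c p * (\<beta> ^ fst p) $ (n + fst p - snd p))"
      by (subst bT) (simp add: Tn)
  qed
qed


type_synonym letter = "(nat \<times> nat) option"

definition lw :: "letter \<Rightarrow> int" where
  "lw x = (case x of None \<Rightarrow> -1 | Some p \<Rightarrow> int (fst p) - 1)"
definition bs :: "letter \<Rightarrow> nat" where
  "bs x = (case x of None \<Rightarrow> 0 | Some p \<Rightarrow> snd p)"
definition okl :: "letter \<Rightarrow> bool" where
  "okl x = (case x of None \<Rightarrow> True | Some p \<Rightarrow> p \<in> idx_I)"

definition valid :: "int \<Rightarrow> int list \<Rightarrow> bool" where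
  "valid k xs \<longleftrightarrow> sum_list xs = - k \<and> (\<forall>j<length xs. sum_list (take j xs) > - k)"

definition forest :: "nat \<Rightarrow> letter list \<Rightarrow> bool" where
  "forest k w \<longleftrightarrow> (\<forall>x\<in>set w. okl x) \<and> valid (int k) (map lw w)"

lemma lw_ge: "lw x \<ge> -1"
  by (cases x) (auto simp: lw_def)

lemma valid_0: "valid 0 xs \<longleftrightarrow> xs = []"
  by (cases xs) (auto simp: valid_def)

lemma forest_0: "forest 0 w \<longleftrightarrow> w = []"
  by (auto simp: forest_def valid_0)

lemma valid_Cons1:
  "valid 1 (x # xs) \<longleftrightarrow> (x = -1 \<and> xs = []) \<or> (x \<ge> 0 \<and> valid (x + 1) xs)"
proof
  assume v: "valid 1 (x # xs)"
  show "(x = -1 \<and> xs = []) \<or> (x \<ge> 0 \<and> valid (x + 1) xs)"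
  proof (cases xs)
    case Nil then show ?thesis using v by (simp add: valid_def)
  next
    case (Cons y ys)
    have "sum_list (take 1 (x#xs)) > -1" using v Cons unfolding valid_def by fastforce
    then have x0: "x \<ge> 0" by simp
    have "valid (x+1) xs" unfolding valid_def
    proof safe
      show "sum_list xs = - (x + 1)" using v by (simp add: valid_def)
      fix j assume "j < length xs"
      then have "sum_list (take (Suc j) (x#xs)) > -1" using v unfolding valid_def
        by (metis length_Cons not_less_eq)
      then show "- (x + 1) < sum_list (take j xs)" by simp
    qed
    with x0 show ?thesis by simp
  qed
next
  assume h: "(x = -1 \<and> xs = []) \<or> (x \<ge> 0 \<and> valid (x + 1) xs)"
  show "valid 1 (x # xs)"
  proof (cases "x = -1 \<and> xs = []")
    case True then show ?thesis by (simp add: valid_def)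
  next
    case False
    then have x0: "x \<ge> 0" and v: "valid (x+1) xs" using h by auto
    show ?thesis unfolding valid_def
    proof safe
      show "sum_list (x # xs) = - 1" using v by (simp add: valid_def)
      fix j assume j: "j < length (x # xs)"
      show "- 1 < sum_list (take j (x # xs))"
      proof (cases j)
        case 0 then show ?thesis by simp
      next
        case (Suc i)
        then have "i < length xs" using j by simp
        then have "sum_list (take i xs) > -(x+1)" using v by (simp add: valid_def)
        then show ?thesis using Suc by simp
      qed
    qed
  qed
qed

lemma forest_Cons1:
  "forest 1 (x # w) \<longleftrightarrow> (x = None \<and> w = []) \<or> (\<exists>p. x = Some p \<and> p \<in> idx_I \<and> forest (fst p) w)"
proof -
  have "forest 1 (x # w) \<longleftrightarrow> okl x \<and> (\<forall>y\<in>set w. okl y) \<and> valid 1 (lw x # map lw w)"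
    by (simp add: forest_def)
  also have "\<dots> \<longleftrightarrow> (x = None \<and> w = []) \<or> (\<exists>p. x = Some p \<and> p \<in> idx_I \<and> forest (fst p) w)"
  proof (cases x)
    case None then show ?thesis by (auto simp: valid_Cons1 lw_def okl_def)
  next
    case (Some p)
    show ?thesis
    proof (cases "p \<in> idx_I")
      case True
      then have "fst p \<ge> 1" by (auto simp: idx_I_def)
      then have "lw x \<ge> 0" "lw x + 1 = int (fst p)" using Some by (auto simp: lw_def)
      then show ?thesis using Some True by (auto simp: valid_Cons1 okl_def forest_def)
    qed (auto simp: Some okl_def)
  qed
  finally show ?thesis .
qed

lemma valid_append:
  assumes "valid 1 u" "valid k v" "k \<ge> 0"
  shows "valid (k + 1) (u @ v)"
  unfolding valid_def
proof safe
  show "sum_list (u @ v) = - (k + 1)" using assms by (simp add: valid_def)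
  fix j assume j: "j < length (u @ v)"
  show "- (k + 1) < sum_list (take j (u @ v))"
  proof (cases "j < length u")
    case True
    then have "sum_list (take j u) > -1" using assms(1) by (simp add: valid_def)
    then show ?thesis using True assms(3) by simp
  next
    case False
    then have "j - length u < length v" using j by simp
    then have "sum_list (take (j - length u) v) > -k" using assms(2) by (simp add: valid_def)
    then show ?thesis using False assms(1) by (simp add: valid_def)
  qed
qed

lemma valid_prefix_unique:
  assumes "valid 1 u" "valid 1 u'" "u @ v = u' @ v'"
  shows "u = u'"
proof -
  have False if "length u < length u'" "valid 1 u" "valid 1 u'" "u @ v = u' @ v'" for u u' v v' :: "int list"
  proof -
    have "take (length u) u' = u" using that(4) that(1)
      by (metis append_eq_append_conv_if append_eq_conv_conj less_imp_le_nat take_all_iff take_take)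
    then have "sum_list (take (length u) u') = -1" using that(2) by (simp add: valid_def)
    with that(1,3) show False by (force simp: valid_def)
  qed
  then have "length u = length u'" using assms by (metis linorder_neqE_nat)
  then show ?thesis using assms(3) by (simp add: append_eq_append_conv)
qed

lemma sum_take_step:
  fixes xs :: "int list"
  assumes "\<forall>x\<in>set xs. x \<ge> -1" "i < length xs"
  shows "sum_list (take (Suc i) xs) \<ge> sum_list (take i xs) - 1"
  using assms by (simp add: take_Suc_conv_app_nth)

lemma valid_split:
  assumes "valid (k + 1) xs" "k \<ge> 0" "\<forall>x\<in>set xs. x \<ge> -1"
  shows "\<exists>u v. xs = u @ v \<and> valid 1 u \<and> valid k v"
proof -
  define P where "P i \<longleftrightarrow> sum_list (take i xs) \<le> -1" for i
  have "P (length xs)" using assms by (simp add: valid_def P_def)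
  define i where "i = (LEAST i. P i)"
  have Pi: "P i" unfolding i_def by (rule LeastI) fact
  have min: "\<not> P j" if "j < i" for j using that not_less_Least i_def by blast
  have ile: "i \<le> length xs" using Least_le \<open>P (length xs)\<close> i_def by blast
  have i0: "i \<noteq> 0" using Pi by (cases i) (auto simp: P_def)
  then obtain i' where i': "i = Suc i'" by (cases i) auto
  have "sum_list (take i xs) \<ge> sum_list (take i' xs) - 1"
    using sum_take_step[OF assms(3), of i'] i' ile by simp
  moreover have "sum_list (take i' xs) > -1" using min[of i'] i' by (simp add: P_def)
  ultimately have si: "sum_list (take i xs) = -1" using Pi by (simp add: P_def)
  define u where "u = take i xs"
  define v where "v = drop i xs"
  have "valid 1 u" unfolding valid_def u_def
  proof safe
    show "sum_list (take i xs) = - 1" by fact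
    fix j assume "j < length (take i xs)"
    then have "j < i" by simp
    then show "- 1 < sum_list (take j (take i xs))" using min[of j] by (simp add: P_def)
  qed
  moreover have "valid k v" unfolding valid_def v_def
  proof safe
    have "sum_list xs = sum_list (take i xs) + sum_list (drop i xs)"
      by (metis append_take_drop_id sum_list_append)
    then show "sum_list (drop i xs) = - k" using si assms(1) by (simp add: valid_def)
    fix j assume "j < length (drop i xs)"
    then have "i + j < length xs" by simp
    then have "sum_list (take (i + j) xs) > -(k+1)" using assms(1) by (simp add: valid_def)
    moreover have "take (i + j) xs = take i xs @ take j (drop i xs)" by (simp add: take_add)
    ultimately show "- k < sum_list (take j (drop i xs))" using si by simp
  qed
  ultimately show ?thesis unfolding u_def v_def by (metis append_take_drop_id)
qed

lemma forest_Suc: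
  "forest (Suc k) w \<longleftrightarrow> (\<exists>u v. w = u @ v \<and> forest 1 u \<and> forest k v)"
proof
  assume f: "forest (Suc k) w"
  then have v: "valid (int k + 1) (map lw w)" unfolding forest_def by (simp only: of_nat_Suc add.commute)
  have m: "\<forall>x\<in>set (map lw w). x \<ge> -1" using lw_ge by auto
  have "\<exists>u v. map lw w = u @ v \<and> valid 1 u \<and> valid (int k) v"
    by (rule valid_split[OF v _ m]) simp
  then obtain u v where uv: "map lw w = u @ v" "valid 1 u" "valid (int k) v"
    by blast
  obtain u' v' where w: "w = u' @ v'" "map lw u' = u" "map lw v' = v"
    using uv(1) unfolding map_eq_append_conv by blast
  have ok: "\<forall>x\<in>set w. okl x" using f unfolding forest_def by blast
  have "forest 1 u'" unfolding forest_def using ok w(1,2) uv(2) by simp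
  moreover have "forest k v'" unfolding forest_def using ok w(1,3) uv(3) by simp
  ultimately show "\<exists>u v. w = u @ v \<and> forest 1 u \<and> forest k v"
    using w by blast
next
  assume "\<exists>u v. w = u @ v \<and> forest 1 u \<and> forest k v"
  then obtain u v where uv: "w = u @ v" "forest 1 u" "forest k v" by blast
  have "valid (int k + 1) (map lw u @ map lw v)"
    by (rule valid_append) (use uv in \<open>auto simp: forest_def\<close>)
  then have "valid (int (Suc k)) (map lw w)" using uv(1) by (simp add: add.commute)
  moreover have "\<forall>x\<in>set w. okl x" using uv unfolding forest_def by auto
  ultimately show "forest (Suc k) w" unfolding forest_def by blast
qed

lemma forest1_prefix_unique:
  assumes "forest 1 u" "forest 1 u'" "u @ v = u' @ v'"
  shows "u = u'"
proof -
  have "map lw u @ map lw v = map lw u' @ map lw v'" using assms(3) by (metis map_append)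
  then have "map lw u = map lw u'"
    using valid_prefix_unique[of "map lw u" "map lw u'" "map lw v" "map lw v'"] assms(1,2)
    unfolding forest_def of_nat_1 by blast
  then have "length u = length u'" by (metis length_map)
  then show ?thesis using assms(3) by (simp add: append_eq_append_conv)
qed


definition lwt :: "(nat \<times> nat \<Rightarrow> real) \<Rightarrow> letter \<Rightarrow> real" where
  "lwt c x = (case x of None \<Rightarrow> 1 | Some p \<Rightarrow> c p)"
definition wtw :: "(nat \<times> nat \<Rightarrow> real) \<Rightarrow> letter list \<Rightarrow> real" where
  "wtw c w = prod_list (map (lwt c) w)"
definition bsum :: "letter list \<Rightarrow> nat" where
  "bsum w = sum_list (map bs w)"
definition Wset :: "nat \<Rightarrow> nat \<Rightarrow> letter list set" where
  "Wset k n = {w. forest k w \<and> bsum w = n}"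
definition g :: "(nat \<times> nat \<Rightarrow> real) \<Rightarrow> nat \<Rightarrow> nat \<Rightarrow> real" where
  "g c k n = (\<Sum>w\<in>Wset k n. wtw c w)"
definition G :: "(nat \<times> nat \<Rightarrow> real) \<Rightarrow> nat \<Rightarrow> real fps" where
  "G c k = Abs_fps (g c k)"

lemmas forest_Cons1' = forest_Cons1[unfolded One_nat_def]

lemma length_bound:
  assumes "\<forall>x\<in>set w. okl x"
  shows "int (length w) \<le> 3 * int (bsum w) - sum_list (map lw w)"
  using assms
proof (induction w)
  case Nil then show ?case by (simp add: bsum_def)
next
  case (Cons x w)
  have "1 \<le> 3 * int (bs x) - lw x"
  proof (cases x)
    case None then show ?thesis by (simp add: bs_def lw_def)
  next
    case (Some p)
    then have "p \<in> idx_I" using Cons.prems by (simp add: okl_def)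
    then show ?thesis using Some by (auto simp: bs_def lw_def idx_I_def)
  qed
  then show ?case using Cons by (simp add: bsum_def)
qed

lemma Wset_finite: "finite (Wset k n)"
proof -
  define A where "A = insert None (Some ` In n)"
  have "finite A" using In_finite unfolding A_def by simp
  have "Wset k n \<subseteq> {xs. set xs \<subseteq> A \<and> length xs \<le> k + 3 * n}"
  proof safe
    fix w assume w: "w \<in> Wset k n"
    then have ok: "\<forall>x\<in>set w. okl x" and s: "sum_list (map lw w) = - int k"
      and b: "bsum w = n"
      by (auto simp: Wset_def forest_def valid_def)
    show "length w \<le> k + 3 * n" using length_bound[OF ok] s b by simp
    fix x assume x: "x \<in> set w"
    show "x \<in> A"
    proof (cases x)
      case None then show ?thesis by (simp add: A_def)
    next
      case (Some p)
      have "bs x \<le> bsum w" unfolding bsum_def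
        using x by (intro member_le_sum_list) auto
      then have "snd p \<le> n" using b Some by (simp add: bs_def)
      moreover have "p \<in> idx_I" using ok x Some by (auto simp: okl_def)
      ultimately show ?thesis using Some by (simp add: A_def In_def)
    qed
  qed
  then show ?thesis using finite_lists_length_le[OF \<open>finite A\<close>] finite_subset by blast
qed

lemma g_0: "g c 0 n = (if n = 0 then 1 else 0)"
proof -
  have "Wset 0 n = (if n = 0 then {[]} else {})"
    by (auto simp: Wset_def forest_0 bsum_def)
  then show ?thesis by (simp add: g_def wtw_def)
qed

lemma G_0: "G c 0 = 1"
  by (rule fps_ext) (simp add: G_def g_0)

lemma bsum_append: "bsum (u @ v) = bsum u + bsum v"
  by (simp add: bsum_def)

lemma wtw_append: "wtw c (u @ v) = wtw c u * wtw c v"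
  by (simp add: wtw_def)

lemma g_Suc: "g c (Suc k) n = (\<Sum>i\<le>n. g c 1 i * g c k (n - i))"
proof -
  define Q where "Q = (SIGMA i:{..n}. Wset 1 i \<times> Wset k (n - i))"
  define h where "h = (\<lambda>(i::nat, (u::letter list, v::letter list)). u @ v)"
  have inj: "inj_on h Q"
  proof (rule inj_onI)
    fix x y assume x: "x \<in> Q" and y: "y \<in> Q" and e: "h x = h y"
    obtain i u v where xe: "x = (i, u, v)" by (cases x) auto
    obtain i' u' v' where ye: "y = (i', u', v')" by (cases y) auto
    have f1: "forest 1 u" "forest 1 u'" using x y xe ye by (auto simp: Q_def Wset_def)
    have e': "u @ v = u' @ v'" using e xe ye by (simp add: h_def)
    have "u = u'" by (rule forest1_prefix_unique[OF f1 e'])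
    moreover have "v = v'" using e' calculation by simp
    moreover have "i = i'" using x y xe ye calculation by (auto simp: Q_def Wset_def)
    ultimately show "x = y" using xe ye by simp
  qed
  have img: "h ` Q = Wset (Suc k) n"
  proof
    show "h ` Q \<subseteq> Wset (Suc k) n"
    proof
      fix w assume "w \<in> h ` Q"
      then obtain i u v where "(i, u, v) \<in> Q" "w = u @ v" by (auto simp: h_def)
      then have "i \<le> n" "forest 1 u" "forest k v" "bsum u = i" "bsum v = n - i" "w = u @ v"
        by (auto simp: Q_def Wset_def)
      then show "w \<in> Wset (Suc k) n" unfolding Wset_def forest_Suc
        by (auto simp: bsum_append)
    qed
    show "Wset (Suc k) n \<subseteq> h ` Q"
    proof
      fix w assume "w \<in> Wset (Suc k) n"
      then obtain u v where uv: "w = u @ v" "forest 1 u" "forest k v" "bsum w = n"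
        unfolding Wset_def forest_Suc by blast
      then have "bsum u + bsum v = n" by (simp add: bsum_append)
      with uv have "(bsum u, u, v) \<in> Q" by (auto simp: Q_def Wset_def)
      moreover have "h (bsum u, u, v) = w" using uv by (simp add: h_def)
      ultimately show "w \<in> h ` Q" by force
    qed
  qed
  have "g c (Suc k) n = (\<Sum>x\<in>Q. wtw c (h x))"
    unfolding g_def img[symmetric] by (rule sum.reindex[OF inj, unfolded o_def])
  also have "\<dots> = (\<Sum>i\<le>n. \<Sum>y\<in>Wset 1 i \<times> Wset k (n - i). wtw c (fst y) * wtw c (snd y))"
    unfolding Q_def h_def
    by (subst sum.Sigma) (simp_all add: Wset_finite wtw_append split_def)
  also have "\<dots> = (\<Sum>i\<le>n. g c 1 i * g c k (n - i))"
    by (simp add: g_def sum_product sum.cartesian_product split_def)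
  finally show ?thesis .
qed

lemma G_Suc: "G c (Suc k) = G c 1 * G c k"
proof (rule fps_ext)
  fix n
  have "G c (Suc k) $ n = g c (Suc k) n" by (simp add: G_def)
  also have "\<dots> = (\<Sum>i\<le>n. g c 1 i * g c k (n - i))" by (rule g_Suc)
  also have "\<dots> = (G c 1 * G c k) $ n" by (simp add: G_def fps_mult_nth atLeast0AtMost)
  finally show "G c (Suc k) $ n = (G c 1 * G c k) $ n" .
qed

lemma G_pow: "G c k = G c 1 ^ k"
proof (induction k)
  case 0 then show ?case by (simp add: G_0)
next
  case (Suc k) then show ?case by (simp only: G_Suc power_Suc)
qed

lemma g_1: "g c 1 n = (if n = 0 then 1 else 0) + (\<Sum>p\<in>In n. c p * g c (fst p) (n - snd p))"
proof -
  define B where "B = (SIGMA p:In n. Wset (fst p) (n - snd p))"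
  define h where "h = (\<lambda>(p, v). Some p # (v::letter list))"
  have inj: "inj_on h B" by (rule inj_onI) (auto simp: h_def)
  have img: "h ` B = Wset 1 n - {[None]}"
  proof
    show "h ` B \<subseteq> Wset 1 n - {[None]}"
    proof
      fix w assume "w \<in> h ` B"
      then obtain p v where pv: "p \<in> In n" "v \<in> Wset (fst p) (n - snd p)" "w = Some p # v"
        by (auto simp: B_def h_def)
      have "p \<in> idx_I" "forest (fst p) v" "snd p \<le> n" "bsum v = n - snd p"
        using pv(1,2) unfolding Wset_def In_def by auto
      then have "forest 1 (Some p # v)" by (intro forest_Cons1[THEN iffD2] disjI2) auto
      then have "forest 1 w" using pv(3) by simp
      moreover have "bsum w = n" using pv(3) \<open>snd p \<le> n\<close> \<open>bsum v = n - snd p\<close>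
        by (simp add: bsum_def bs_def)
      moreover have "w \<noteq> [None]" using pv(3) by simp
      ultimately show "w \<in> Wset 1 n - {[None]}" unfolding Wset_def by blast
    qed
    show "Wset 1 n - {[None]} \<subseteq> h ` B"
    proof
      fix w assume w: "w \<in> Wset 1 n - {[None]}"
      then have f: "forest 1 w" and bw: "bsum w = n" and wn: "w \<noteq> [None]" unfolding Wset_def by blast+
      have "w \<noteq> []" using f by (auto simp: forest_def valid_def)
      then obtain x v where xv: "w = x # v" by (cases w) auto
      have "forest 1 (x # v)" using f xv by simp
      then have "(x = None \<and> v = []) \<or> (\<exists>p. x = Some p \<and> p \<in> idx_I \<and> forest (fst p) v)"
        by (rule forest_Cons1[THEN iffD1])
      then obtain p where p: "x = Some p" "p \<in> idx_I" "forest (fst p) v"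
        using wn xv by blast
      have "bsum w = snd p + bsum v" using xv p by (simp add: bsum_def bs_def)
      then have "(p, v) \<in> B" using bw p by (auto simp: B_def In_def Wset_def)
      then show "w \<in> h ` B" using xv p by (force simp: h_def)
    qed
  qed
  have fin: "finite B" unfolding B_def using In_finite Wset_finite by auto
  have s1: "(\<Sum>w\<in>Wset 1 n \<inter> {[None]}. wtw c w) = (if n = 0 then 1 else 0)"
  proof -
    have "forest 1 [None]" by (rule forest_Cons1[THEN iffD2]) simp
    then have "Wset 1 n \<inter> {[None]} = (if n = 0 then {[None]} else {})"
      by (auto simp: Wset_def bsum_def bs_def)
    then show ?thesis by (simp add: wtw_def lwt_def)
  qed
  have "(\<Sum>w\<in>Wset 1 n - {[None]}. wtw c w) = (\<Sum>x\<in>B. wtw c (h x))"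
    unfolding img[symmetric] by (rule sum.reindex[OF inj, unfolded o_def])
  also have "\<dots> = (\<Sum>p\<in>In n. \<Sum>v\<in>Wset (fst p) (n - snd p). c p * wtw c v)"
    unfolding B_def h_def
    by (subst sum.Sigma) (simp_all add: In_finite Wset_finite wtw_def lwt_def split_def)
  also have "\<dots> = (\<Sum>p\<in>In n. c p * g c (fst p) (n - snd p))"
    by (simp add: g_def sum_distrib_left)
  finally have s2: "(\<Sum>w\<in>Wset 1 n - {[None]}. wtw c w) = (\<Sum>p\<in>In n. c p * g c (fst p) (n - snd p))" .
  have "g c 1 n = (\<Sum>w\<in>Wset 1 n \<inter> {[None]}. wtw c w) + (\<Sum>w\<in>Wset 1 n - {[None]}. wtw c w)"
    unfolding g_def by (rule sum.Int_Diff[OF Wset_finite])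
  then show ?thesis by (simp only: s1 s2)
qed

lemma Rec_G: "Rec c (fps_X * G c 1)"
  unfolding Rec_def
proof (intro conjI allI)
  show "(fps_X * G c 1) $ 0 = 0" by simp
  fix n
  have "(fps_X * G c 1) $ Suc n = g c 1 n" by (simp add: G_def)
  also have "\<dots> = (if n = 0 then 1 else 0) + (\<Sum>p\<in>In n. c p * g c (fst p) (n - snd p))"
    by (rule g_1)
  also have "(\<Sum>p\<in>In n. c p * g c (fst p) (n - snd p)) =
     (\<Sum>p\<in>In n. c p * ((fps_X * G c 1) ^ fst p) $ (n + fst p - snd p))"
  proof (rule sum.cong, simp)
    fix p assume "p \<in> In n"
    then have b: "snd p \<le> n" by (simp add: In_def)
    have "((fps_X * G c 1) ^ fst p) $ (n + fst p - snd p) = (fps_X ^ fst p * G c (fst p)) $ (n + fst p - snd p)"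
      by (simp only: power_mult_distrib G_pow[of c "fst p"])
    also have "\<dots> = g c (fst p) (n - snd p)"
      using b by (simp add: fps_X_power_mult_nth G_def)
    finally show "c p * g c (fst p) (n - snd p) = c p * ((fps_X * G c 1) ^ fst p) $ (n + fst p - snd p)"
      by simp
  qed
  finally show "(fps_X * G c 1) $ Suc n = (if n = 0 then 1 else 0) +
     (\<Sum>p\<in>In n. c p * ((fps_X * G c 1) ^ fst p) $ (n + fst p - snd p))" .
qed


lemma mset_rot: "mset (rotate n xs) = mset xs"
  by (metis append_take_drop_id mset_append rotate_drop_take union_commute)

lemma rot_prefix:
  fixes xs :: "int list"
  assumes i: "i < length xs" and j: "j \<le> length xs"
  shows "sum_list (take j (rotate i xs)) =
    (if j \<le> length xs - i then sum_list (take (i + j) xs) - sum_list (take i xs)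
     else sum_list xs - sum_list (take i xs) + sum_list (take (j - (length xs - i)) xs))"
proof -
  have r: "rotate i xs = drop i xs @ take i xs" using i by (simp add: rotate_drop_take)
  have t1: "sum_list (take j (drop i xs)) = sum_list (take (i + j) xs) - sum_list (take i xs)" for j
  proof -
    have "take (i + j) xs = take i xs @ take j (drop i xs)" by (simp add: take_add)
    then show ?thesis by simp
  qed
  show ?thesis
  proof (cases "j \<le> length xs - i")
    case True
    then show ?thesis using r t1 by simp
  next
    case False
    have "take j (drop i xs @ take i xs) = drop i xs @ take (j - (length xs - i)) (take i xs)"
      using False by simp
    moreover have "take (j - (length xs - i)) (take i xs) = take (j - (length xs - i)) xs"
      using False j by (simp add: min_def)
    moreover have "sum_list (drop i xs) = sum_list xs - sum_list (take i xs)"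
      by (metis append_take_drop_id add_diff_cancel_left' sum_list_append)
    ultimately show ?thesis using r False by simp
  qed
qed

lemma valid_rotate_iff:
  fixes xs :: "int list"
  defines "p \<equiv> \<lambda>k. sum_list (take k xs)"
  assumes i: "i < length xs" and s: "sum_list xs = -1"
  shows "valid 1 (rotate i xs) \<longleftrightarrow> (\<forall>k<length xs. p i \<le> p k) \<and> (\<forall>k<i. p i < p k)"
proof -
  let ?L = "length xs"
  have pL: "p ?L = -1" using s by (simp add: p_def)
  have rp: "sum_list (take j (rotate i xs)) =
     (if j \<le> ?L - i then p (i + j) - p i else -1 - p i + p (j - (?L - i)))" if "j \<le> ?L" for j
    using rot_prefix[OF i that] s by (simp add: p_def)
  have srot: "sum_list (rotate i xs) = -1" using s by (metis mset_rot sum_mset_sum_list)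
  show ?thesis
  proof
    assume v: "valid 1 (rotate i xs)"
    then have v': "\<And>j. j < ?L \<Longrightarrow> sum_list (take j (rotate i xs)) \<ge> 0"
      by (force simp: valid_def)
    have c1: "p i \<le> p k" if "k < ?L" for k
    proof (cases "i \<le> k")
      case True
      have "sum_list (take (k - i) (rotate i xs)) \<ge> 0" using v' that by simp
      moreover have "k - i \<le> ?L - i" "i + (k - i) = k" "k - i \<le> ?L" using that True by auto
      ultimately show ?thesis using rp[of "k - i"] by simp
    next
      case False
      show ?thesis
      proof (cases "k = 0")
        case True
        have "sum_list (take (?L - i) (rotate i xs)) \<ge> 0" using v' i False True by simp
        then have "p ?L - p i \<ge> 0" using rp[of "?L - i"] i by simp
        then show ?thesis using pL True by (simp add: p_def)
      next
        case k0: False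
        have "sum_list (take (?L - i + k) (rotate i xs)) \<ge> 0" using v' that False by simp
        moreover have "\<not> (?L - i + k \<le> ?L - i)" "?L - i + k - (?L - i) = k" "?L - i + k \<le> ?L"
          using that False k0 by auto
        ultimately show ?thesis using rp[of "?L - i + k"] by simp
      qed
    qed
    have c2: "p i < p k" if "k < i" for k
    proof (cases "k = 0")
      case True
      have "sum_list (take (?L - i) (rotate i xs)) \<ge> 0" using v' i that by simp
      then have "p ?L - p i \<ge> 0" using rp[of "?L - i"] i by simp
      then show ?thesis using pL True by (simp add: p_def)
    next
      case False
      have "sum_list (take (?L - i + k) (rotate i xs)) \<ge> 0" using v' that i by simp
      moreover have "\<not> (?L - i + k \<le> ?L - i)" "?L - i + k - (?L - i) = k" "?L - i + k \<le> ?L"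
        using that i False by auto
      ultimately show ?thesis using rp[of "?L - i + k"] by simp
    qed
    show "(\<forall>k<?L. p i \<le> p k) \<and> (\<forall>k<i. p i < p k)" using c1 c2 by blast
  next
    assume h: "(\<forall>k<?L. p i \<le> p k) \<and> (\<forall>k<i. p i < p k)"
    have p0: "p 0 = 0" by (simp add: p_def)
    show "valid 1 (rotate i xs)" unfolding valid_def
    proof (intro conjI allI impI)
      show "sum_list (rotate i xs) = - 1" by (simp add: srot)
      fix j assume j: "j < length (rotate i xs)"
      then have jL: "j < ?L" by simp
      show "- 1 < sum_list (take j (rotate i xs))"
      proof (cases "j \<le> ?L - i")
        case True
        show ?thesis
        proof (cases "i + j < ?L")
          case True
          then show ?thesis using rp[of j] jL h \<open>j \<le> ?L - i\<close> by force
        next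
          case False
          then have "i + j = ?L" "i > 0" using \<open>j \<le> ?L - i\<close> jL i by auto
          then have "p i < 0" using h p0 by force
          then show ?thesis using rp[of j] jL \<open>j \<le> ?L - i\<close> \<open>i + j = ?L\<close> pL by simp
        qed
      next
        case False
        then have "j - (?L - i) < i" using jL by simp
        then have "p i < p (j - (?L - i))" using h by blast
        then show ?thesis using rp[of j] jL False by simp
      qed
    qed
  qed
qed

lemma cycle_lemma:
  fixes xs :: "int list"
  assumes s: "sum_list xs = -1"
  shows "card {i. i < length xs \<and> valid 1 (rotate i xs)} = 1"
proof -
  define p where "p = (\<lambda>k. sum_list (take k xs))"
  let ?L = "length xs"
  have L0: "?L > 0" using s by (cases xs) auto
  define \<mu> where "\<mu> = Min (p ` {..<?L})"
  have "\<mu> \<in> p ` {..<?L}" unfolding \<mu>_def using L0 by (intro Min_in) auto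
  then obtain i1 where i1: "i1 < ?L" "p i1 = \<mu>" by auto
  have mu_le: "\<mu> \<le> p k" if "k < ?L" for k unfolding \<mu>_def using that by (intro Min_le) auto
  define i0 where "i0 = (LEAST i. i < ?L \<and> p i = \<mu>)"
  have i0: "i0 < ?L" "p i0 = \<mu>" unfolding i0_def using LeastI[of "\<lambda>i. i < ?L \<and> p i = \<mu>" i1] i1 by auto
  have i0min: "\<not> (k < ?L \<and> p k = \<mu>)" if "k < i0" for k
    using not_less_Least[OF that[unfolded i0_def]] unfolding i0_def by blast
  have P: "valid 1 (rotate i xs) \<longleftrightarrow> (\<forall>k<?L. p i \<le> p k) \<and> (\<forall>k<i. p i < p k)" if "i < ?L" for i
    using valid_rotate_iff[OF that s] unfolding p_def .
  have "{i. i < ?L \<and> valid 1 (rotate i xs)} = {i0}"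
  proof safe
    show "i0 < ?L" by (rule i0(1))
    show "valid 1 (rotate i0 xs)"
    proof (subst P[OF i0(1)], safe)
      fix k assume "k < ?L" then show "p i0 \<le> p k" using i0 mu_le by simp
    next
      fix k assume k: "k < i0"
      then have "k < ?L" using i0 by simp
      then show "p i0 < p k" using i0 mu_le[of k] i0min[OF k] by force
    qed
    fix i assume i: "i < ?L" "valid 1 (rotate i xs)"
    then have h: "(\<forall>k<?L. p i \<le> p k) \<and> (\<forall>k<i. p i < p k)" using P by blast
    then have "p i \<le> p i0" using i0 by blast
    then have pi: "p i = \<mu>" using mu_le[OF i(1)] i0 by simp
    show "i = i0"
    proof (rule ccontr)
      assume "i \<noteq> i0"
      then consider "i < i0" | "i0 < i" by linarith
      then show False
      proof cases
        case 1 then show False using i0min[OF 1] i pi by blast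
      next
        case 2 then show False using h i0 pi by force
      qed
    qed
  qed
  then show ?thesis by simp
qed


lemma card_filter_sum: "finite A \<Longrightarrow> card {x\<in>A. Q x} = (\<Sum>x\<in>A. if Q x then 1 else 0)"
  by (simp add: sum.inter_filter[symmetric])

lemma rotate_bij_card:
  assumes "i < size M"
  shows "card {w \<in> permutations_of_multiset M. Q (rotate i w)} = card {w \<in> permutations_of_multiset M. Q w}"
proof -
  let ?P = "permutations_of_multiset M"
  have inj: "inj_on (rotate i) {w \<in> ?P. Q (rotate i w)}"
  proof (rule inj_onI)
    fix x y assume x: "x \<in> {w \<in> ?P. Q (rotate i w)}" and y: "y \<in> {w \<in> ?P. Q (rotate i w)}"
      and e: "rotate i x = rotate i y"
    have lx: "length x = size M" "length y = size M"
      using x y by (auto simp: length_finite_permutations_of_multiset)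
    have "rotate (size M - i) (rotate i x) = rotate (size M - i) (rotate i y)" using e by simp
    then show "x = y" using lx assms by (simp add: rotate_rotate rotate_id)
  qed
  have "rotate i ` {w \<in> ?P. Q (rotate i w)} = {w \<in> ?P. Q w}"
  proof
    show "rotate i ` {w \<in> ?P. Q (rotate i w)} \<subseteq> {w \<in> ?P. Q w}"
      by (auto simp: permutations_of_multiset_def mset_rot)
    show "{w \<in> ?P. Q w} \<subseteq> rotate i ` {w \<in> ?P. Q (rotate i w)}"
    proof
      fix v assume v: "v \<in> {w \<in> ?P. Q w}"
      then have lv: "length v = size M" by (auto simp: length_finite_permutations_of_multiset)
      define u where "u = rotate (size M - i) v"
      have "rotate i u = v" using lv assms by (simp add: u_def rotate_rotate rotate_id)
      moreover have "u \<in> ?P" using v by (auto simp: u_def permutations_of_multiset_def mset_rot)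
      ultimately show "v \<in> rotate i ` {w \<in> ?P. Q (rotate i w)}" using v by force
    qed
  qed
  then show ?thesis using card_image[OF inj] by simp
qed

lemma count_valid_perms:
  assumes ok: "\<forall>x\<in>#M. okl x" and s: "sum_mset (image_mset lw M) = -1"
  shows "card {w \<in> permutations_of_multiset M. forest 1 w} * size M = card (permutations_of_multiset M)"
proof -
  let ?P = "permutations_of_multiset M"
  let ?L = "size M"
  have fin: "finite ?P" by (rule finite_permutations_of_multiset)
  have F: "forest 1 (rotate i w) \<longleftrightarrow> valid 1 (rotate i (map lw w))" if "w \<in> ?P" for w i
  proof -
    have "set w = set_mset M" using that by (auto simp: permutations_of_multiset_def)
    then show ?thesis using ok by (simp add: forest_def rotate_map)
  qed
  have one: "card {i. i < ?L \<and> forest 1 (rotate i w)} = 1" if "w \<in> ?P" for w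
  proof -
    have mw: "mset w = M" "length w = ?L" using that
      by (auto simp: permutations_of_multiset_def length_finite_permutations_of_multiset)
    have "sum_list (map lw w) = -1"
      using s mw by (metis mset_map sum_mset_sum_list)
    then have "card {i. i < length (map lw w) \<and> valid 1 (rotate i (map lw w))} = 1"
      by (rule cycle_lemma)
    then show ?thesis using F[OF that] mw by simp
  qed
  have "card ?P = (\<Sum>w\<in>?P. card {i. i < ?L \<and> forest 1 (rotate i w)})"
    using one by simp
  also have "\<dots> = (\<Sum>w\<in>?P. \<Sum>i<?L. if forest 1 (rotate i w) then 1 else 0)"
  proof (rule sum.cong, simp)
    fix w assume "w \<in> ?P"
    have "{i. i < ?L \<and> forest 1 (rotate i w)} = {i\<in>{..<?L}. forest 1 (rotate i w)}" by auto
    then show "card {i. i < ?L \<and> forest 1 (rotate i w)} = (\<Sum>i<?L. if forest 1 (rotate i w) then 1 else 0)"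
      using card_filter_sum[of "{..<?L}"] by simp
  qed
  also have "\<dots> = (\<Sum>i<?L. \<Sum>w\<in>?P. if forest 1 (rotate i w) then 1 else 0)"
    by (rule sum.swap)
  also have "\<dots> = (\<Sum>i<?L. card {w \<in> ?P. forest 1 w})"
  proof (rule sum.cong, simp)
    fix i assume "i \<in> {..<?L}"
    then have "card {w \<in> ?P. forest 1 (rotate i w)} = card {w \<in> ?P. forest 1 w}"
      by (intro rotate_bij_card) simp
    then show "(\<Sum>w\<in>?P. if forest 1 (rotate i w) then 1 else 0) = card {w \<in> ?P. forest 1 w}"
      using card_filter_sum[OF fin, of "\<lambda>w. forest 1 (rotate i w)"] by simp
  qed
  also have "\<dots> = card {w \<in> ?P. forest 1 w} * ?L" by simp
  finally show ?thesis by simp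
qed


lemma sum_list_letters:
  fixes f :: "letter \<Rightarrow> 'a::comm_semiring_1"
  assumes "finite S" "set w \<subseteq> insert None (Some ` S)"
  shows "sum_list (map f w) = of_nat (count_list w None) * f None +
           (\<Sum>p\<in>S. of_nat (count_list w (Some p)) * f (Some p))"
  using assms(2)
proof (induction w)
  case Nil then show ?case by simp
next
  case (Cons x w)
  then have IH: "sum_list (map f w) = of_nat (count_list w None) * f None +
           (\<Sum>p\<in>S. of_nat (count_list w (Some p)) * f (Some p))" by simp
  show ?case
  proof (cases x)
    case None then show ?thesis using IH by (simp add: algebra_simps)
  next
    case (Some q)
    then have q: "q \<in> S" using Cons.prems by auto
    have "(\<Sum>p\<in>S. of_nat (count_list (x # w) (Some p)) * f (Some p)) =
          (\<Sum>p\<in>S. of_nat (count_list w (Some p)) * f (Some p) + (if p = q then f (Some q) else 0))"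
      by (rule sum.cong) (auto simp: Some algebra_simps)
    also have "\<dots> = (\<Sum>p\<in>S. of_nat (count_list w (Some p)) * f (Some p)) + f (Some q)"
      using q assms(1) by (simp add: sum.distrib)
    finally show ?thesis using IH Some by (simp add: algebra_simps)
  qed
qed

lemma prod_list_letters:
  fixes f :: "letter \<Rightarrow> 'a::comm_monoid_mult"
  assumes "finite S" "set w \<subseteq> insert None (Some ` S)"
  shows "prod_list (map f w) = f None ^ count_list w None *
           (\<Prod>p\<in>S. f (Some p) ^ count_list w (Some p))"
  using assms(2)
proof (induction w)
  case Nil then show ?case by simp
next
  case (Cons x w)
  then have IH: "prod_list (map f w) = f None ^ count_list w None *
           (\<Prod>p\<in>S. f (Some p) ^ count_list w (Some p))" by simp
  show ?case
  proof (cases x)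
    case None then show ?thesis using IH by (simp add: algebra_simps)
  next
    case (Some q)
    then have q: "q \<in> S" using Cons.prems by auto
    have "(\<Prod>p\<in>S. f (Some p) ^ count_list (x # w) (Some p)) =
          (\<Prod>p\<in>S. f (Some p) ^ count_list w (Some p) * (if p = q then f (Some q) else 1))"
      by (rule prod.cong) (auto simp: Some algebra_simps)
    also have "\<dots> = (\<Prod>p\<in>S. f (Some p) ^ count_list w (Some p)) * f (Some q)"
      using q assms(1) by (simp add: prod.distrib)
    finally show ?thesis using IH Some by (simp add: algebra_simps)
  qed
qed

definition cnt :: "letter list \<Rightarrow> nat \<times> nat \<Rightarrow> nat" where
  "cnt w = (\<lambda>p. count_list w (Some p))"

lemma supp_cnt: "supp_fam (cnt w) = {p. Some p \<in> set w}"
  by (auto simp: supp_fam_def cnt_def count_list_0_iff)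

lemma finite_supp_cnt: "finite (supp_fam (cnt w))"
proof -
  have "supp_fam (cnt w) = Some -` set w" by (auto simp: supp_cnt)
  then show ?thesis by (simp add: finite_vimageI)
qed

lemma set_sub_cnt: "set w \<subseteq> insert None (Some ` supp_fam (cnt w))"
proof
  fix x assume x: "x \<in> set w"
  show "x \<in> insert None (Some ` supp_fam (cnt w))"
  proof (cases x)
    case None then show ?thesis by simp
  next
    case (Some p)
    then have "p \<in> supp_fam (cnt w)" using x by (simp add: supp_cnt)
    then show ?thesis using Some by simp
  qed
qed

lemma cnt_in_S:
  assumes "w \<in> Wset 1 k"
  shows "cnt w \<in> S_set (Suc k)"
proof -
  have f: "forest 1 w" and b: "bsum w = k" using assms by (auto simp: Wset_def)
  have ok: "\<forall>x\<in>set w. okl x" using f by (simp add: forest_def)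
  have sub: "supp_fam (cnt w) \<subseteq> idx_I"
    using ok by (auto simp: supp_cnt okl_def)
  have "k = sum_list (map bs w)" using b by (simp add: bsum_def)
  also have "\<dots> = (\<Sum>p\<in>supp_fam (cnt w). cnt w p * snd p)"
    using sum_list_letters[OF finite_supp_cnt set_sub_cnt, of bs] by (simp add: bs_def cnt_def)
  also have "\<dots> = (\<Sum>(a, b)\<in>supp_fam (cnt w). b * cnt w (a, b))"
    by (rule sum.cong) auto
  finally show ?thesis using sub finite_supp_cnt by (simp add: S_set_def)
qed


definition Lm :: "(nat \<times> nat \<Rightarrow> nat) \<Rightarrow> nat" where
  "Lm m = 1 + (\<Sum>(a, b)\<in>supp_fam m. (a - 1) * m (a, b))"
definition Am :: "(nat \<times> nat \<Rightarrow> nat) \<Rightarrow> nat" where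
  "Am m = (\<Sum>(a, b)\<in>supp_fam m. a * m (a, b))"
definition Mset :: "(nat \<times> nat \<Rightarrow> nat) \<Rightarrow> letter multiset" where
  "Mset m = replicate_mset (Lm m) None + (\<Sum>p\<in>supp_fam m. replicate_mset (m p) (Some p))"

lemma count_Mset_None: "count (Mset m) None = Lm m"
  by (simp add: Mset_def count_sum)

lemma count_Mset_Some:
  assumes "finite (supp_fam m)"
  shows "count (Mset m) (Some p) = m p"
proof -
  have "count (Mset m) (Some p) = (\<Sum>q\<in>supp_fam m. if p = q then m q else 0)"
    by (simp add: Mset_def count_sum)
  also have "\<dots> = m p" using assms by (simp add: sum.delta' supp_fam_def)
  finally show ?thesis .
qed

lemma mset_eq_Mset:
  assumes "finite (supp_fam m)"
  shows "mset w = Mset m \<longleftrightarrow> count_list w None = Lm m \<and> cnt w = m"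
proof
  assume h: "mset w = Mset m"
  then have "count (mset w) None = Lm m" by (simp add: count_Mset_None)
  moreover have "cnt w p = m p" for p
    using arg_cong[OF h, of "\<lambda>M. count M (Some p)"] count_Mset_Some[OF assms]
    by (simp add: cnt_def count_mset)
  ultimately show "count_list w None = Lm m \<and> cnt w = m" by (auto simp: count_mset)
next
  assume h: "count_list w None = Lm m \<and> cnt w = m"
  show "mset w = Mset m"
  proof (rule multiset_eqI)
    fix x show "count (mset w) x = count (Mset m) x"
      using h count_Mset_Some[OF assms] count_Mset_None
      by (cases x) (auto simp: count_mset cnt_def)
  qed
qed

lemma Lm_int:
  assumes "supp_fam m \<subseteq> idx_I"
  shows "int (Lm m) = 1 + (\<Sum>p\<in>supp_fam m. int (m p) * (int (fst p) - 1))"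
proof -
  have "int (Lm m) = 1 + (\<Sum>p\<in>supp_fam m. int ((fst p - 1) * m p))"
    by (simp add: Lm_def case_prod_beta)
  also have "(\<Sum>p\<in>supp_fam m. int ((fst p - 1) * m p)) = (\<Sum>p\<in>supp_fam m. int (m p) * (int (fst p) - 1))"
  proof (rule sum.cong, simp)
    fix p assume "p \<in> supp_fam m"
    then have "fst p \<ge> 1" using assms by (auto simp: idx_I_def)
    then show "int ((fst p - 1) * m p) = int (m p) * (int (fst p) - 1)" by (simp add: of_nat_diff)
  qed
  finally show ?thesis .
qed

lemma sums_cnt:
  assumes fin: "finite (supp_fam m)" and c: "cnt w = m"
  shows "sum_list (map lw w) = - int (count_list w None) + (\<Sum>p\<in>supp_fam m. int (m p) * (int (fst p) - 1))"
    and "bsum w = (\<Sum>p\<in>supp_fam m. m p * snd p)"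
    and "length w = count_list w None + (\<Sum>p\<in>supp_fam m. m p)"
    and "wtw c' w = (\<Prod>p\<in>supp_fam m. c' p ^ m p)"
proof -
  have sub: "set w \<subseteq> insert None (Some ` supp_fam m)" using set_sub_cnt[of w] c by simp
  have cw: "count_list w (Some p) = m p" for p using fun_cong[OF c, of p] by (simp add: cnt_def)
  show "sum_list (map lw w) = - int (count_list w None) + (\<Sum>p\<in>supp_fam m. int (m p) * (int (fst p) - 1))"
    using sum_list_letters[OF fin sub, of lw] by (simp add: lw_def cw)
  show "bsum w = (\<Sum>p\<in>supp_fam m. m p * snd p)"
    using sum_list_letters[OF fin sub, of bs] by (simp add: bsum_def bs_def cw)
  have "length w = sum_list (map (\<lambda>_. 1::nat) w)" by (simp add: sum_list_triv)
  then show "length w = count_list w None + (\<Sum>p\<in>supp_fam m. m p)"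
    using sum_list_letters[OF fin sub, of "\<lambda>_. 1::nat"] by (simp add: cw)
  show "wtw c' w = (\<Prod>p\<in>supp_fam m. c' p ^ m p)"
    using prod_list_letters[OF fin sub, of "lwt c'"] by (simp add: wtw_def lwt_def cw)
qed

lemma fiber_eq:
  assumes m: "m \<in> S_set (Suc k)"
  shows "{w \<in> Wset 1 k. cnt w = m} = {w \<in> permutations_of_multiset (Mset m). forest 1 w}"
proof -
  have fin: "finite (supp_fam m)" and sub: "supp_fam m \<subseteq> idx_I"
    and sk: "Suc k = 1 + (\<Sum>(a, b)\<in>supp_fam m. b * m (a, b))"
    using m by (auto simp: S_set_def)
  have kk: "k = (\<Sum>p\<in>supp_fam m. m p * snd p)"
    using sk by (simp add: case_prod_beta mult.commute)
  show ?thesis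
  proof (intro equalityI subsetI)
    fix w assume "w \<in> {w \<in> Wset 1 k. cnt w = m}"
    then have w: "w \<in> Wset 1 k" and c: "cnt w = m" by auto
    have "sum_list (map lw w) = -1" using w by (simp add: Wset_def forest_def valid_def)
    then have "count_list w None = Lm m"
      using sums_cnt(1)[OF fin c] Lm_int[OF sub] by simp
    then have "mset w = Mset m" using mset_eq_Mset[OF fin] c by simp
    moreover have "forest 1 w" using w by (simp add: Wset_def)
    ultimately show "w \<in> {w \<in> permutations_of_multiset (Mset m). forest 1 w}"
      by (simp add: permutations_of_multiset_def)
  next
    fix w assume "w \<in> {w \<in> permutations_of_multiset (Mset m). forest 1 w}"
    then have w: "mset w = Mset m" and f: "forest 1 w" by (auto simp: permutations_of_multiset_def)
    then have c: "cnt w = m" using mset_eq_Mset[OF fin] by simp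
    have "bsum w = k" using sums_cnt(2)[OF fin c] kk by simp
    then show "w \<in> {w \<in> Wset 1 k. cnt w = m}" using f c by (simp add: Wset_def)
  qed
qed

lemma card_fiber:
  assumes m: "m \<in> S_set (Suc k)"
  shows "real (card {w \<in> Wset 1 k. cnt w = m}) =
     fact (Am m) / ((\<Prod>(a, b)\<in>supp_fam m. fact (m (a, b))) * fact (Lm m))"
    and "card {w \<in> Wset 1 k. cnt w = m} > 0"
proof -
  have fin: "finite (supp_fam m)" and sub: "supp_fam m \<subseteq> idx_I"
    using m by (auto simp: S_set_def)
  obtain w0 where w0: "mset w0 = Mset m" using ex_mset by blast
  then have cn: "count_list w0 None = Lm m" and c: "cnt w0 = m" using mset_eq_Mset[OF fin] by auto
  have "sum_mset (image_mset lw (Mset m)) = sum_list (map lw w0)"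
    using w0 by (metis mset_map sum_mset_sum_list)
  also have "\<dots> = -1" using sums_cnt(1)[OF fin c] Lm_int[OF sub] cn by simp
  finally have s: "sum_mset (image_mset lw (Mset m)) = -1" .
  have ok: "\<forall>x\<in>#Mset m. okl x"
  proof
    fix x assume x: "x \<in># Mset m"
    show "okl x"
    proof (cases x)
      case None then show ?thesis by (simp add: okl_def)
    next
      case (Some p)
      then have "m p \<noteq> 0" using x count_Mset_Some[OF fin, of p] by (metis count_eq_zero_iff)
      then show ?thesis using Some sub by (auto simp: okl_def supp_fam_def)
    qed
  qed
  have size: "size (Mset m) = Am m + 1"
  proof -
    have "size (Mset m) = length w0" using w0 by (metis size_mset)
    also have "\<dots> = Lm m + (\<Sum>p\<in>supp_fam m. m p)" using sums_cnt(3)[OF fin c] cn by simp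
    also have "\<dots> = Am m + 1"
    proof -
      have "(\<Sum>p\<in>supp_fam m. (fst p - 1) * m p) + (\<Sum>p\<in>supp_fam m. m p) = (\<Sum>p\<in>supp_fam m. fst p * m p)"
        unfolding sum.distrib[symmetric]
      proof (rule sum.cong, simp)
        fix p assume "p \<in> supp_fam m"
        then have "fst p \<ge> 1" using sub by (auto simp: idx_I_def)
        then show "(fst p - 1) * m p + m p = fst p * m p"
          by (metis One_nat_def Suc_diff_le diff_Suc_1 mult_Suc add.commute)
      qed
      then show ?thesis by (simp add: Lm_def Am_def case_prod_beta)
    qed
    finally show ?thesis .
  qed
  have setM: "set_mset (Mset m) = insert None (Some ` supp_fam m)"
  proof -
    have "x \<in># Mset m \<longleftrightarrow> x \<in> insert None (Some ` supp_fam m)" for x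
    proof (cases x)
      case None then show ?thesis using count_Mset_None[of m] by (simp add: Lm_def flip: count_greater_zero_iff)
    next
      case (Some p)
      have "x \<in># Mset m \<longleftrightarrow> m p \<noteq> 0" using count_Mset_Some[OF fin, of p] Some
        by (metis count_eq_zero_iff)
      moreover have "x \<in> insert None (Some ` supp_fam m) \<longleftrightarrow> m p \<noteq> 0"
        using Some by (auto simp: supp_fam_def)
      ultimately show ?thesis by simp
    qed
    then show ?thesis by blast
  qed
  have prodf: "(\<Prod>x\<in>set_mset (Mset m). fact (count (Mset m) x)) =
      fact (Lm m) * (\<Prod>p\<in>supp_fam m. fact (m p) :: nat)"
  proof -
    have "(\<Prod>x\<in>set_mset (Mset m). fact (count (Mset m) x)) =
        fact (count (Mset m) None) * (\<Prod>x\<in>Some ` supp_fam m. fact (count (Mset m) x) :: nat)"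
      unfolding setM using fin by (subst prod.insert) auto
    also have "(\<Prod>x\<in>Some ` supp_fam m. fact (count (Mset m) x) :: nat) = (\<Prod>p\<in>supp_fam m. fact (m p))"
      by (subst prod.reindex) (auto simp: count_Mset_Some[OF fin])
    finally show ?thesis by (simp add: count_Mset_None)
  qed
  have fe: "{w \<in> Wset 1 k. cnt w = m} = {w \<in> permutations_of_multiset (Mset m). forest 1 w}"
    by (rule fiber_eq[OF m])
  have cv: "card {w \<in> Wset 1 k. cnt w = m} * (Am m + 1) = card (permutations_of_multiset (Mset m))"
    using count_valid_perms[OF ok s] fe size by simp
  have cp: "card (permutations_of_multiset (Mset m)) * (fact (Lm m) * (\<Prod>p\<in>supp_fam m. fact (m p))) = fact (Am m + 1)"
    using card_permutations_of_multiset_aux[of "Mset m"] prodf size by simp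
  have key: "card {w \<in> Wset 1 k. cnt w = m} * (fact (Lm m) * (\<Prod>p\<in>supp_fam m. fact (m p))) = (fact (Am m) :: nat)"
  proof -
    define X where "X = card {w \<in> Wset 1 k. cnt w = m}"
    define Fp where "Fp = (fact (Lm m) * (\<Prod>p\<in>supp_fam m. fact (m p)) :: nat)"
    define Y where "Y = card (permutations_of_multiset (Mset m))"
    have cv': "X * (Am m + 1) = Y" using cv unfolding X_def Y_def .
    have cp': "Y * Fp = fact (Am m + 1)" using cp unfolding Y_def Fp_def .
    have "(Am m + 1) * (X * Fp) = (X * (Am m + 1)) * Fp" by (simp only: mult_ac)
    also have "\<dots> = fact (Am m + 1)" by (simp only: cv' cp')
    also have "\<dots> = (Am m + 1) * fact (Am m)" by (simp only: Suc_eq_plus1[symmetric] fact_Suc) simp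
    finally have eq: "(Am m + 1) * (X * Fp) = (Am m + 1) * fact (Am m)" .
    have nz: "Am m + 1 \<noteq> 0" by simp
    have "X * Fp = fact (Am m)" using mult_left_cancel[OF nz] eq by blast
    then show ?thesis unfolding X_def Fp_def .
  qed
  define R where "R = real (card {w \<in> Wset 1 k. cnt w = m})"
  define Fr where "Fr = (fact (Lm m) * (\<Prod>p\<in>supp_fam m. fact (m p)) :: real)"
  have RF: "R * Fr = fact (Am m)"
    using arg_cong[OF key, of real] unfolding R_def Fr_def by (simp add: of_nat_fact of_nat_prod)
  have "(\<Prod>p\<in>supp_fam m. fact (m p) :: real) > 0" by (simp add: prod_pos)
  then have Fpos: "Fr \<noteq> 0" unfolding Fr_def by simp
  have "R = fact (Am m) / Fr" using RF Fpos by (simp add: eq_divide_eq)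
  moreover have "Fr = (\<Prod>(a, b)\<in>supp_fam m. fact (m (a, b))) * fact (Lm m)"
    unfolding Fr_def by (simp add: case_prod_beta mult.commute)
  ultimately show "real (card {w \<in> Wset 1 k. cnt w = m}) =
     fact (Am m) / ((\<Prod>(a, b)\<in>supp_fam m. fact (m (a, b))) * fact (Lm m))"
    unfolding R_def by simp
  show "card {w \<in> Wset 1 k. cnt w = m} > 0"
  proof (rule ccontr)
    assume "\<not> card {w \<in> Wset 1 k. cnt w = m} > 0"
    then have "card {w \<in> Wset 1 k. cnt w = m} = 0" by simp
    then show False using key by simp
  qed
qed


theorem lemma2:
  fixes c :: "nat \<times> nat \<Rightarrow> real" and \<beta> :: "real fps"
  assumes const0: "fps_nth \<beta> 0 = 0"
    and eqn: "\<exists>T. (eq_term c \<beta> has_sum T) idx_I \<and> \<beta> = fps_X * (1 + T)"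
  shows "\<forall>n\<ge>1. fps_nth \<beta> n =
    (\<Sum>m\<in>S_set n.
       (fact (\<Sum>(a, b)\<in>supp_fam m. a * m (a, b)) /
        ((\<Prod>(a, b)\<in>supp_fam m. fact (m (a, b))) *
         fact (1 + (\<Sum>(a, b)\<in>supp_fam m. (a - 1) * m (a, b))))) *
       (\<Prod>(a, b)\<in>supp_fam m. c (a, b) ^ m (a, b)))"
proof -
  have R: "Rec c \<beta>" by (rule Rec_beta[OF const0 eqn])
  have bG: "\<beta> = fps_X * G c 1" by (rule Rec_unique[OF R Rec_G])
  show ?thesis
  proof (intro allI impI)
    fix n :: nat assume "n \<ge> 1"
    then obtain k where n: "n = Suc k" by (cases n) auto
    have img: "cnt ` Wset 1 k = S_set n"
    proof
      show "cnt ` Wset 1 k \<subseteq> S_set n" using cnt_in_S n by blast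
      show "S_set n \<subseteq> cnt ` Wset 1 k"
      proof
        fix m assume m: "m \<in> S_set n"
        then have "card {w \<in> Wset 1 k. cnt w = m} > 0" using card_fiber(2)[of m k] n by simp
        then obtain w where "w \<in> Wset 1 k" "cnt w = m" by (metis (mono_tags, lifting) card_gt_0_iff empty_iff mem_Collect_eq ex_in_conv)
        then show "m \<in> cnt ` Wset 1 k" by blast
      qed
    qed
    have "\<beta> $ n = g c 1 k" using bG n by (simp add: G_def)
    also have "\<dots> = (\<Sum>w\<in>Wset 1 k. wtw c w)" by (simp add: g_def)
    also have "\<dots> = (\<Sum>m\<in>cnt ` Wset 1 k. \<Sum>w\<in>{x. x \<in> Wset 1 k \<and> cnt x = m}. wtw c w)"
      by (rule sum.image_gen[OF Wset_finite])
    also have "\<dots> = (\<Sum>m\<in>S_set n.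
       (fact (\<Sum>(a, b)\<in>supp_fam m. a * m (a, b)) /
        ((\<Prod>(a, b)\<in>supp_fam m. fact (m (a, b))) *
         fact (1 + (\<Sum>(a, b)\<in>supp_fam m. (a - 1) * m (a, b))))) *
       (\<Prod>(a, b)\<in>supp_fam m. c (a, b) ^ m (a, b)))"
      unfolding img
    proof (rule sum.cong, simp)
      fix m assume m: "m \<in> S_set n"
      then have fin: "finite (supp_fam m)" by (simp add: S_set_def)
      have "(\<Sum>w\<in>{x. x \<in> Wset 1 k \<and> cnt x = m}. wtw c w) =
            (\<Sum>w\<in>{x. x \<in> Wset 1 k \<and> cnt x = m}. \<Prod>p\<in>supp_fam m. c p ^ m p)"
        by (rule sum.cong) (auto simp: sums_cnt(4)[OF fin])
      also have "\<dots> = real (card {w \<in> Wset 1 k. cnt w = m}) * (\<Prod>p\<in>supp_fam m. c p ^ m p)"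
        by simp
      also have "\<dots> = fact (Am m) / ((\<Prod>(a, b)\<in>supp_fam m. fact (m (a, b))) * fact (Lm m)) *
                      (\<Prod>p\<in>supp_fam m. c p ^ m p)"
        using card_fiber(1)[of m k] m n by simp
      also have "\<dots> = (fact (\<Sum>(a, b)\<in>supp_fam m. a * m (a, b)) /
        ((\<Prod>(a, b)\<in>supp_fam m. fact (m (a, b))) *
         fact (1 + (\<Sum>(a, b)\<in>supp_fam m. (a - 1) * m (a, b))))) *
       (\<Prod>(a, b)\<in>supp_fam m. c (a, b) ^ m (a, b))"
        by (simp add: Am_def Lm_def case_prod_beta)
      finally show "(\<Sum>w\<in>{x. x \<in> Wset 1 k \<and> cnt x = m}. wtw c w) = (fact (\<Sum>(a, b)\<in>supp_fam m. a * m (a, b)) /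
        ((\<Prod>(a, b)\<in>supp_fam m. fact (m (a, b))) *
         fact (1 + (\<Sum>(a, b)\<in>supp_fam m. (a - 1) * m (a, b))))) *
       (\<Prod>(a, b)\<in>supp_fam m. c (a, b) ^ m (a, b))" .
    qed
    finally show "\<beta> $ n = (\<Sum>m\<in>S_set n.
       (fact (\<Sum>(a, b)\<in>supp_fam m. a * m (a, b)) /
        ((\<Prod>(a, b)\<in>supp_fam m. fact (m (a, b))) *
         fact (1 + (\<Sum>(a, b)\<in>supp_fam m. (a - 1) * m (a, b))))) *
       (\<Prod>(a, b)\<in>supp_fam m. c (a, b) ^ m (a, b)))" .
  qed
qed


end
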